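(* Let $n$ be a positive integer. If $l_2(n)=2^{k+1}s+\frac{1-(-2)^k}{3}$ for some nonnegative integer $k$ and integer $s$, then $l_2(n+1)=3^{k+1}s+\frac{1-(-3)^k}{2}$.
   Context: For a positive integer $m$, the triangle $T_m$ is an array whose row $x$ ($x=1,2,\dots$) has $x$ entries, in columns $0,\dots,x-1$. Row $1$ is the single entry $1$. For $x>1$, row $x$ is obtained from row $x-1$ by rotating it cyclically left by $m$ positions (the entry in column $c$ of row $x-1$ moves to column $(c-m)\bmod(x-1)\in\{0,\dots,x-2\}$ of row $x$), then appending in column $x-1$ a new entry equal to $1$ plus the entry in column $0$ of row $x-1$. $T_m(x,c)$ denotes the entry in row $x$, column $c$. Define $l_m(1)=1$ and, for $n\ge2$, $l_m(n)=\min\{x>l_m(n-1): T_m(x,0)=1\}$. Here $m=2$ (in $T_2$ the value $1$ heads infinitely many rows, so $l_2(n)$ is defined for all $n$). *)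

theory Defs
  imports Main
begin

text \<open>Row x of the triangle T_m, as a list of length x (columns 0..x-1).
  List.rotate m moves the entry in column c to column (c - m) mod length.\<close>
fun trow :: "nat \<Rightarrow> nat \<Rightarrow> nat list" where
  "trow m 0 = []"
| "trow m (Suc 0) = [1]"
| "trow m (Suc (Suc x)) = rotate m (trow m (Suc x)) @ [Suc (hd (trow m (Suc x)))]"

definition T :: "nat \<Rightarrow> nat \<Rightarrow> nat \<Rightarrow> nat" where
  "T m x c = trow m x ! c"

text \<open>l m n for n >= 1; the value at n = 0 is irrelevant.\<close>
fun l :: "nat \<Rightarrow> nat \<Rightarrow> nat" where
  "l m 0 = 0"
| "l m (Suc 0) = 1"
| "l m (Suc (Suc n)) = (LEAST x. x > l m (Suc n) \<and> T m x 0 = 1)"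

end

theory Submission
  imports Defs
begin

fun p :: "nat \<Rightarrow> nat" where
  "p 0 = 0"
| "p (Suc 0) = 0"
| "p (Suc (Suc x)) = (p (Suc x) + 2 * x) mod (Suc x)"

lemma p_step: "r \<ge> 1 \<Longrightarrow> p (Suc r) = (p r + 2 * (r - 1)) mod r"
  by (cases r) auto

lemma p_lt: "r \<ge> 1 \<Longrightarrow> p r < r"
proof (cases r rule: p.cases)
  case (3 x)
  have "(p (Suc x) + 2 * x) mod Suc x < Suc x" by simp
  then show ?thesis using 3 by (simp add: less_SucI)
qed auto

lemma modlem:
  assumes "c < Suc x" "q < Suc x"
  shows "((c + 2) mod Suc x = q) = (c = (q + 2 * x) mod Suc x)"
proof
  assume h: "(c + 2) mod Suc x = q"
  have "(q + 2 * x) mod Suc x = ((c + 2) + 2 * x) mod Suc x"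
    using h by (metis mod_add_left_eq)
  also have "(c + 2) + 2 * x = c + 2 * Suc x" by simp
  also have "(c + 2 * Suc x) mod Suc x = c" using assms
    by (metis mod_mult_self2 mod_less mult.commute)
  finally show "c = (q + 2 * x) mod Suc x" by simp
next
  assume h: "c = (q + 2 * x) mod Suc x"
  have "(c + 2) mod Suc x = ((q + 2 * x) + 2) mod Suc x"
    using h by (metis mod_add_left_eq)
  also have "(q + 2 * x) + 2 = q + 2 * Suc x" by simp
  also have "(q + 2 * Suc x) mod Suc x = q" using assms
    by (metis mod_mult_self2 mod_less mult.commute)
  finally show "(c + 2) mod Suc x = q" .
qed

lemma inv: "x \<ge> 1 \<Longrightarrow> length (trow 2 x) = x \<and> (\<forall>c<x. trow 2 x ! c \<ge> 1)
   \<and> (\<forall>c<x. (trow 2 x ! c = 1) = (c = p x))"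
proof (induction x rule: nat_induct_at_least)
  case base
  then show ?case by simp
next
  case (Suc n)
  obtain x where n: "n = Suc x" using Suc.hyps by (cases n) auto
  define r where "r = trow 2 n"
  have len: "length r = n" and pos: "\<forall>c<n. r ! c \<ge> 1"
    and one: "\<forall>c<n. (r ! c = 1) = (c = p n)" using Suc.IH r_def by auto
  have tr: "trow 2 (Suc n) = rotate 2 r @ [Suc (hd r)]" using n r_def by simp
  have hd: "hd r = r ! 0" using len n by (cases r) auto
  have pn: "p n < n" using p_lt Suc.hyps by auto
  have ps: "p (Suc n) = (p n + 2 * x) mod Suc x" using n by simp
  have rot: "\<And>c. c < n \<Longrightarrow> rotate 2 r ! c = r ! ((c + 2) mod n)"
    using len by (simp add: nth_rotate)
  have A: "length (trow 2 (Suc n)) = Suc n" using tr len by simp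
  have B: "\<forall>c<Suc n. trow 2 (Suc n) ! c \<ge> 1"
  proof (intro allI impI)
    fix c assume c: "c < Suc n"
    show "trow 2 (Suc n) ! c \<ge> 1"
    proof (cases "c < n")
      case True
      then show ?thesis using tr rot len pos n by (simp add: nth_append)
    next
      case False
      then have "c = n" using c by simp
      then show ?thesis using tr len by (simp add: nth_append)
    qed
  qed
  have C: "\<forall>c<Suc n. (trow 2 (Suc n) ! c = 1) = (c = p (Suc n))"
  proof (intro allI impI)
    fix c assume c: "c < Suc n"
    show "(trow 2 (Suc n) ! c = 1) = (c = p (Suc n))"
    proof (cases "c < n")
      case True
      have e: "trow 2 (Suc n) ! c = r ! ((c + 2) mod n)" using tr rot len True by (simp add: nth_append)
      have "(r ! ((c + 2) mod n) = 1) = ((c + 2) mod n = p n)"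
        using one n by simp
      also have "\<dots> = (c = p (Suc n))" using modlem[of c x "p n"] True pn n ps by simp
      finally show ?thesis using e by simp
    next
      case False
      then have cn: "c = n" using c by simp
      have "r ! 0 \<ge> 1" using pos n by simp
      then have "trow 2 (Suc n) ! c \<noteq> 1" using tr len cn hd by (simp add: nth_append)
      moreover have "p (Suc n) < n" using ps n by simp
      ultimately show ?thesis using cn by simp
    qed
  qed
  show ?case using A B C by blast
qed

lemma T_iff: "x \<ge> 1 \<Longrightarrow> (T 2 x 0 = 1) = (p x = 0)"
  using inv[of x] unfolding T_def by auto

lemma p_dec: "r \<ge> 1 \<Longrightarrow> p r \<ge> 2 \<Longrightarrow> p (Suc r) = p r - 2"
proof -
  assume r: "r \<ge> 1" and w: "p r \<ge> 2"
  have lt: "p r < r" using p_lt r by simp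
  have "p r + 2 * (r - 1) = (p r - 2) + r * 2" using w r by simp
  then have "p (Suc r) = ((p r - 2) + r * 2) mod r" using p_step r by simp
  also have "\<dots> = p r - 2" using lt by (metis mod_mult_self1 mod_less less_imp_diff_less mult.commute)
  finally show ?thesis .
qed

lemma p_wrap0: "r \<ge> 2 \<Longrightarrow> p r = 0 \<Longrightarrow> p (Suc r) = r - 2"
proof -
  assume r: "r \<ge> 2" and w: "p r = 0"
  have "p r + 2 * (r - 1) = (r - 2) + r * 1" using w r by simp
  then have "p (Suc r) = ((r - 2) + r * 1) mod r" using p_step r by simp
  also have "\<dots> = (r - 2) mod r" by (metis mod_mult_self2)
  also have "\<dots> = r - 2" using r by simp
  finally show ?thesis .
qed

lemma p_wrap1: "r \<ge> 2 \<Longrightarrow> p r = 1 \<Longrightarrow> p (Suc r) = r - 1"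
proof -
  assume r: "r \<ge> 2" and w: "p r = 1"
  have "p r + 2 * (r - 1) = (r - 1) + r * 1" using w r by simp
  then have "p (Suc r) = ((r - 1) + r * 1) mod r" using p_step r by simp
  also have "\<dots> = (r - 1) mod r" by (metis mod_mult_self2)
  also have "\<dots> = r - 1" using r by simp
  finally show ?thesis .
qed

lemma descent: "r \<ge> 1 \<Longrightarrow> p r = v + 2 * i \<Longrightarrow> j \<le> i \<Longrightarrow> p (r + j) = v + 2 * (i - j)"
proof (induction j)
  case 0
  then show ?case by simp
next
  case (Suc j)
  then have h: "p (r + j) = v + 2 * (i - j)" by simp
  have "p (Suc (r + j)) = p (r + j) - 2" using p_dec h Suc.prems by simp
  then show ?case using h Suc.prems by simp
qed

definition Z :: "nat \<Rightarrow> nat \<Rightarrow> bool" where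
  "Z a b \<longleftrightarrow> a < b \<and> p b = 0 \<and> (\<forall>y. a < y \<and> y < b \<longrightarrow> p y \<noteq> 0)"

lemma Z_uniq: "Z a b \<Longrightarrow> Z a b' \<Longrightarrow> b = b'"
  unfolding Z_def by (metis linorder_neqE_nat)

lemma Z_trans: "a < r \<Longrightarrow> (\<forall>y. a < y \<and> y \<le> r \<longrightarrow> p y \<noteq> 0) \<Longrightarrow> Z r b \<Longrightarrow> Z a b"
  unfolding Z_def by (metis le_less_linear order.strict_trans)

lemma seg:
  assumes "r \<ge> 1" "p (Suc r) = v + 2 * i"
  shows "p (Suc r + i) = v \<and> (\<forall>y. r < y \<and> y < Suc r + i \<longrightarrow> p y \<ge> 2)"
proof -
  have "p (Suc r + i) = v" using descent[of "Suc r" v i i] assms by simp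
  moreover have "\<forall>y. r < y \<and> y < Suc r + i \<longrightarrow> p y \<ge> 2"
  proof (intro allI impI)
    fix y assume y: "r < y \<and> y < Suc r + i"
    then obtain j where j: "y = Suc r + j" "j < i" by (metis Suc_leI add.commute le_Suc_ex nat_add_left_cancel_less)
    have "p y = v + 2 * (i - j)" using descent[of "Suc r" v i j] assms j by simp
    then show "p y \<ge> 2" using j by simp
  qed
  ultimately show ?thesis by blast
qed

lemma Q1: assumes "p r = 1" "odd r" "r \<ge> 3" shows "\<exists>b. Z r b \<and> 2 * b = 3 * r + 1"
proof -
  define i where "i = (r - 1) div 2"
  have "p (Suc r) = 0 + 2 * i" using p_wrap1 assms i_def by (simp add: odd_two_times_div_two_nat)
  then have h: "p (Suc r + i) = 0 \<and> (\<forall>y. r < y \<and> y < Suc r + i \<longrightarrow> p y \<ge> 2)"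
    using seg[of r 0 i] assms by simp
  have "Z r (Suc r + i)" unfolding Z_def using h by fastforce
  moreover have "2 * (Suc r + i) = 3 * r + 1" using assms i_def by (simp add: odd_two_times_div_two_nat)
  ultimately show ?thesis by blast
qed

lemma Q2: assumes "p r = 1" "even r" "r \<ge> 2"
  shows "\<exists>r'. r < r' \<and> p r' = 1 \<and> 2 * r' = 3 * r \<and> (\<forall>y. r < y \<and> y < r' \<longrightarrow> p y \<ge> 2)"
proof -
  define i where "i = (r - 2) div 2"
  have "p (Suc r) = 1 + 2 * i" using p_wrap1 assms i_def by auto
  then have h: "p (Suc r + i) = 1 \<and> (\<forall>y. r < y \<and> y < Suc r + i \<longrightarrow> p y \<ge> 2)"
    using seg[of r 1 i] assms by simp
  moreover have "2 * (Suc r + i) = 3 * r" using assms i_def by auto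
  ultimately show ?thesis by (intro exI[of _ "Suc r + i"]) auto
qed

lemma S0: assumes "p x = 0" "even x" "x \<ge> 2" shows "\<exists>b. Z x b \<and> 2 * b = 3 * x"
proof -
  define i where "i = (x - 2) div 2"
  have "p (Suc x) = 0 + 2 * i" using p_wrap0 assms i_def by auto
  then have h: "p (Suc x + i) = 0 \<and> (\<forall>y. x < y \<and> y < Suc x + i \<longrightarrow> p y \<ge> 2)"
    using seg[of x 0 i] assms by simp
  have "Z x (Suc x + i)" unfolding Z_def using h by fastforce
  moreover have "2 * (Suc x + i) = 3 * x" using assms i_def by auto
  ultimately show ?thesis by blast
qed

lemma S1: assumes "p x = 0" "odd x" "x \<ge> 3"
  shows "\<exists>r'. x < r' \<and> p r' = 1 \<and> 2 * r' + 1 = 3 * x \<and> (\<forall>y. x < y \<and> y < r' \<longrightarrow> p y \<ge> 2)"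
proof -
  define i where "i = (x - 3) div 2"
  have "p (Suc x) = 1 + 2 * i" using p_wrap0 assms i_def by (auto elim!: oddE)
  then have h: "p (Suc x + i) = 1 \<and> (\<forall>y. x < y \<and> y < Suc x + i \<longrightarrow> p y \<ge> 2)"
    using seg[of x 1 i] assms by simp
  moreover have "2 * (Suc x + i) + 1 = 3 * x" using assms i_def by (auto elim!: oddE)
  ultimately show ?thesis by (intro exI[of _ "Suc x + i"]) auto
qed

lemma lemA: "r = 2^j * u \<Longrightarrow> odd u \<Longrightarrow> p r = 1 \<Longrightarrow> r \<ge> 2 \<Longrightarrow> \<exists>b. Z r b \<and> 2 * b = 3^(j+1) * u + 1"
proof (induction j arbitrary: r u)
  case 0
  then have "r \<ge> 3" by (metis One_nat_def Suc_1 dvd_refl le_antisym not_less_eq_eq numeral_3_eq_3 mult_1 power_0)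
  then show ?case using Q1 0 by simp
next
  case (Suc j)
  have ev: "even r" using Suc.prems by simp
  obtain r' where r': "r < r'" "p r' = 1" "2 * r' = 3 * r" "\<forall>y. r < y \<and> y < r' \<longrightarrow> p y \<ge> 2"
    using Q2[OF Suc.prems(3) ev Suc.prems(4)] by blast
  have rr: "r' = 2^j * (3 * u)" using r'(3) Suc.prems(1) by simp
  have "odd (3 * u)" using Suc.prems by simp
  then obtain b where b: "Z r' b" "2 * b = 3^(j+1) * (3 * u) + 1"
    using Suc.IH[OF rr] r' Suc.prems by force
  have "Z r b" using Z_trans[of r r' b] r' b by (metis le_neq_implies_less not_numeral_le_zero zero_neq_one)
  moreover have "2 * b = 3^(Suc j+1) * u + 1" using b by simp
  ultimately show ?case by blast
qed

lemma factor2: "r > 0 \<Longrightarrow> \<exists>j u. r = 2^j * (u::nat) \<and> odd u"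
proof (induction r rule: less_induct)
  case (less r)
  show ?case
  proof (cases "even r")
    case True
    then obtain r'' where r'': "r = 2 * r''" by blast
    then have "r'' < r" "r'' > 0" using less.prems by auto
    then obtain j u where "r'' = 2^j * u" "odd u" using less.IH by blast
    then show ?thesis using r'' by (intro exI[of _ "Suc j"] exI[of _ u]) auto
  next
    case False
    then show ?thesis by (intro exI[of _ 0] exI[of _ r]) auto
  qed
qed

lemma next_zero: "a \<ge> 1 \<Longrightarrow> p a = 0 \<Longrightarrow> \<exists>b. Z a b"
proof -
  assume a: "a \<ge> 1" and pa: "p a = 0"
  consider "a = 1" | "even a" "a \<ge> 2" | "odd a" "a \<ge> 3"
    using a by (metis One_nat_def Suc_1 dvd_refl le_antisym not_less_eq_eq numeral_3_eq_3 odd_pos le_neq_implies_less Suc_leI less_2_cases_iff  linorder_not_le)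
  then show ?thesis
  proof cases
    case 1
    have "Z 1 2" unfolding Z_def by (simp add: numeral_2_eq_2)
    then show ?thesis using 1 by blast
  next
    case 2
    then show ?thesis using S0 pa by blast
  next
    case 3
    obtain r' where r': "a < r'" "p r' = 1" "2 * r' + 1 = 3 * a" "\<forall>y. a < y \<and> y < r' \<longrightarrow> p y \<ge> 2"
      using S1 pa 3 by blast
    obtain j u where ju: "r' = 2^j * u" "odd u" using factor2 r' by (metis gr_zeroI not_less0)
    obtain b where "Z r' b" using lemA[OF ju r'(2)] r' 3 by auto
    then show ?thesis using Z_trans[of a r' b] r' by (metis le_neq_implies_less zero_neq_one not_numeral_le_zero)
  qed
qed

lemma least_Z: assumes "a \<ge> 1" "Z a b" shows "(LEAST x. x > a \<and> T 2 x 0 = 1) = b"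
proof (rule Least_equality)
  show "a < b \<and> T 2 b 0 = 1" using assms T_iff[of b] unfolding Z_def by auto
next
  fix y assume y: "a < y \<and> T 2 y 0 = 1"
  then have "p y = 0" using T_iff[of y] assms by auto
  then show "b \<le> y" using y assms unfolding Z_def by (metis leI)
qed

lemma l_Z: "n \<ge> 1 \<Longrightarrow> l 2 n \<ge> 1 \<and> p (l 2 n) = 0 \<and> Z (l 2 n) (l 2 (Suc n))"
proof (induction n rule: nat_induct_at_least)
  case base
  obtain b where b: "Z 1 b" using next_zero[of 1] by auto
  have "l 2 (Suc 1) = b" using least_Z[OF _ b] by simp
  then show ?case using b by simp
next
  case (Suc n)
  then obtain m where m: "n = Suc m" by (cases n) auto
  have h: "l 2 (Suc n) \<ge> 1" "p (l 2 (Suc n)) = 0" using Suc.IH unfolding Z_def by auto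
  obtain b where b: "Z (l 2 (Suc n)) b" using next_zero h by blast
  have "l 2 (Suc (Suc n)) = b" using least_Z[OF h(1) b] m by simp
  then show ?case using h b by simp
qed

lemma dvd3: "(3::int) dvd 1 - (-2)^k"
proof (induction k)
  case (Suc k)
  have "1 - (-2::int)^Suc k = (1 - (-2)^k) + 3 * (-2)^k" by simp
  then show ?case using Suc by (metis dvd_add dvd_triv_left)
qed simp

lemma dvd2: "(2::int) dvd 1 - (-3)^k"
proof (induction k)
  case (Suc k)
  have "1 - (-3::int)^Suc k = (1 - (-3)^k) + 2 * (2 * (-3)^k)" by simp
  then show ?case using Suc by (metis dvd_add dvd_triv_left)
qed simp

theorem mainTheorem18:
  fixes n k :: nat and s :: int
  assumes "n \<ge> 1"
    and "int (l 2 n) = 2 ^ (k + 1) * s + (1 - (-2) ^ k) div 3"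
  shows "int (l 2 (n + 1)) = 3 ^ (k + 1) * s + (1 - (-3) ^ k) div 2"
proof -
  define x0 where "x0 = l 2 n"
  define c where "c = (1 - (-2::int) ^ k) div 3"
  define d where "d = (1 - (-3::int) ^ k) div 2"
  have c3: "3 * c = 1 - (-2) ^ k" using dvd3[of k] c_def by simp
  have d2: "2 * d = 1 - (-3) ^ k" using dvd2[of k] d_def by simp
  have hx: "int x0 = 2 ^ (k + 1) * s + c" using assms(2) x0_def c_def by simp
  have x0: "x0 \<ge> 1" "p x0 = 0" "Z x0 (l 2 (n + 1))" using l_Z[OF assms(1)] x0_def by auto
  have "\<exists>b. Z x0 b \<and> int b = 3 ^ (k + 1) * s + d"
  proof (cases k)
    case 0
    then have "c = 0" "d = 0" using c3 d2 by auto
    then have e: "int x0 = 2 * s" using hx 0 by simp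
    then have "even (int x0)" by simp
    then have "even x0" by simp
    moreover have "x0 \<noteq> 1" using calculation by auto
    then have "x0 \<ge> 2" using x0(1) by linarith
    ultimately obtain b where b: "Z x0 b" "2 * b = 3 * x0" using S0 x0 by blast
    then have "int (2 * b) = int (3 * x0)" by simp
    then have "2 * int b = 2 * (3 * s)" using e by simp
    then have "int b = 3 ^ (k + 1) * s + d" using 0 \<open>d = 0\<close> by simp
    then show ?thesis using b by blast
  next
    case (Suc j)
    have c3': "3 * c = 1 + 2 * (-2) ^ j" using c3 Suc by simp
    have d2': "2 * d = 1 + 3 * (-3) ^ j" using d2 Suc by simp
    have e3: "3 * int x0 = 2 * (6 * 2 ^ j * s + (-2) ^ j) + 1" using hx c3' Suc by (simp add: algebra_simps)
    then have "odd (3 * int x0)" by simp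
    then have ox: "odd x0" by simp
    show ?thesis
    proof (cases "x0 = 1")
      case True
      then have e1: "1 = 6 * 2 ^ j * s + (-2::int) ^ j" using e3 by simp
      show ?thesis
      proof (cases j)
        case 0
        then have "s = 0" using e1 by simp
        moreover have "d = 2" using d2' 0 by simp
        moreover have "Z 1 2" unfolding Z_def by (simp add: numeral_2_eq_2)
        ultimately show ?thesis using True Suc 0 by (intro exI[of _ 2]) simp
      next
        case (Suc i)
        then have "1 = 2 * (6 * 2 ^ i * s - (-2::int) ^ i)" using e1 by (simp add: algebra_simps)
        then have False by (metis dvd_triv_left odd_one)
        then show ?thesis ..
      qed
    next
      case False
      moreover have "x0 \<noteq> 2" using ox by auto
      ultimately have "x0 \<ge> 3" using x0(1) by linarith
      then obtain r' where r': "x0 < r'" "p r' = 1" "2 * r' + 1 = 3 * x0" "\<forall>y. x0 < y \<and> y < r' \<longrightarrow> p y \<ge> 2"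
        using S1 x0 ox by blast
      have "int (2 * r' + 1) = int (3 * x0)" using r'(3) by simp
      then have "2 * int r' + 1 = 3 * int x0" by simp
      then have "int r' = 6 * 2 ^ j * s + (-2) ^ j" using e3 by simp
      also have "\<dots> = 2 ^ j * (6 * s + (-1) ^ j)" by (simp add: power_minus[of 2] algebra_simps)
      finally have er: "int r' = 2 ^ j * (6 * s + (-1) ^ j)" .
      define U where "U = 6 * s + (-1) ^ j"
      have "int r' > 0" using r'(1) by simp
      then have "U > 0" using er unfolding U_def by (simp add: zero_less_mult_iff)
      have oU: "odd U" unfolding U_def by simp
      define u where "u = nat U"
      have iu: "int u = U" using \<open>U > 0\<close> u_def by simp
      have "int r' = int (2 ^ j * u)" using er iu U_def by simp
      then have ru: "r' = 2 ^ j * u" by (simp only: of_nat_eq_iff)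
      have "odd (int u)" using oU iu by simp
      then have ou: "odd u" by simp
      obtain b where b: "Z r' b" "2 * b = 3 ^ (j + 1) * u + 1" using lemA[OF ru ou r'(2)] r' x0 by auto
      have nz: "\<forall>y. x0 < y \<and> y \<le> r' \<longrightarrow> p y \<noteq> 0"
      proof (intro allI impI)
        fix y assume y: "x0 < y \<and> y \<le> r'"
        show "p y \<noteq> 0"
        proof (cases "y = r'")
          case True then show ?thesis using r'(2) by simp
        next
          case False then show ?thesis using r'(4) y by fastforce
        qed
      qed
      have Zb: "Z x0 b" using Z_trans[OF r'(1) nz b(1)] .
      have "int (2 * b) = int (3 ^ (j + 1) * u + 1)" using b(2) by simp
      then have "2 * int b = 3 ^ (j + 1) * int u + 1" by simp
      then have "2 * int b = 3 ^ (j + 1) * U + 1" using iu by simp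
      also have "\<dots> = 2 * (3 ^ (k + 1) * s + d)" using d2' Suc U_def by (simp add: power_minus[of 3] algebra_simps)
      finally have "int b = 3 ^ (k + 1) * s + d" by simp
      then show ?thesis using Zb by blast
    qed
  qed
  then obtain b where "Z x0 b" "int b = 3 ^ (k + 1) * s + d" by blast
  then show ?thesis using Z_uniq x0(3) d_def by metis
qed

end
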